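(* In the setting described in the context, let $M(f,g)=E\big(\langle f,T_{s(Y)}g\rangle^2_{\mathcal H_U}\big)$. The minimization defining the CP-sequence of $s(Y)$ is equivalent to the following sequence of maximization problems: Step 1: maximize $M(f,g)$ subject to $\|f\|_{\mathcal H_U}=1$ and $\|g\|_{\mathcal H_V}=1$; Step $k$ ($k=2,\ldots,d$): maximize $M(f,g)$ subject to $\|f\|_{\mathcal H_U}=1$, $\langle f,f_i\rangle_{\mathcal H_U}=0$ for $i=1,\ldots,k-1$, $\|g\|_{\mathcal H_V}=1$, $\langle g,g_i\rangle_{\mathcal H_V}=0$ for $i=1,\ldots,k-1$, where $(f_i,g_i)$, $i=1,\ldots,k-1$, are the solutions obtained in Steps $1$ through $k-1$.
   Context: Let $(\Omega,\mathcal F,P)$ be a probability space, $X:\Omega\to\mathbb R^{p\times q}$ a random matrix, $Y$ a random element of a measurable space $\Omega_Y$ with distribution $P_Y$, $r=\min(p,q)$. Assume with probability one: $\operatorname{rank}X=r$; the first components of the left and right singular vectors of $X$ are nonzero; the nonzero singular values of $X$ are simple. For $x\in\mathbb R^{p\times q}$ write $x=\sum_{i=1}^r\lambda_i(x)U_i^0(x)V_i^0(x)^\top$ (SVD, $\lambda_i(x)>0$, first component of $U_i^0(x)$ positive) and set $U_i(x)=\lambda_i(x)^{1/2}U_i^0(x)$, $V_i(x)=\lambda_i(x)^{1/2}V_i^0(x)$. Let $\kappa_U,\kappa_V,\kappa_Y$ be positive definite kernels on $\mathbb R^p,\mathbb R^q,\Omega_Y$; $\mathcal H_U,\mathcal H_V,\mathcal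 H_Y$ are the subspaces of their RKHSs spanned by centered kernel functions $\kappa_U(\cdot,u)-E\kappa_U(\cdot,U)$, $\kappa_V(\cdot,v)-E\kappa_V(\cdot,V)$, $\kappa_Y(\cdot,y)-E\kappa_Y(\cdot,Y)$ (Bochner means). $\mathcal H_U\otimes\mathcal H_V$ is the completion of $\operatorname{span}\{fg\}$, $fg(u,v)=f(u)g(v)$, with $\langle f_1g_1,f_2g_2\rangle_\otimes=\langle f_1,f_2\rangle_{\mathcal H_U}\langle g_1,g_2\rangle_{\mathcal H_V}$. Feature map $F(X)=\sum_{i=1}^r[\kappa_U(\cdot,U_i(X))-E\kappa_U(\cdot,U_i(X))][\kappa_V(\cdot,V_i(X))-E\kappa_V(\cdot,V_i(X))]$. For Hilbert spaces, $h_1\otimes h_2$ is the operator $g\mapsto h_1\langle h_2,g\rangle$. Assume $E\|F(X)\|_\otimes^2<\infty$, $E[\kappa_Y(Y,Y)]<\infty$; $\Sigma_{FF}=E[F(X)\otimes F(X)]-E[F(X)]\otimes E[F(X)]$, $\Sigma_{FY}=E[F(X)\otimes(\kappa_Y(\cdot,Y)-E\kappa_Y(\cdot,Y))]$; assume $\operatorname{ran}(\Sigma_{FY})\subseteq\operatorname{ran}(\Sigma_{FF})$; $R_{FY}=\Sigma_{FF}^\dagger\Sigma_{FY}$ where $A^\dagger$ is the inverse of $A|\overline{\operatorname{ran}}(A)$ onto $\operatorname{ran}(A)$; $s(Y)=R_{FY}[\kappa_Y(\cdot,Y)-E\kappa_Y(\cdot,Y)]$. For $\rho\in\mathcal H_U\otimes\mathcal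 H_V$, $T_\rho:\mathcal H_V\to\mathcal H_U$ is the unique bounded linear operator with $\langle f,T_\rho g\rangle_{\mathcal H_U}=\langle fg,\rho\rangle_\otimes$. Define $L(f,g)=\min_{u\in L_2(P_Y)}E\|s(Y)-u(Y)fg\|_\otimes^2$. The CP-sequence of $s(Y)$ is defined recursively: $(f_1,g_1)$ minimizes $L$ over $\mathcal H_U\times\mathcal H_V$; for $k\ge2$, $(f_k,g_k)$ minimizes $L$ over $(\operatorname{span}\{f_1,\ldots,f_{k-1}\})^\perp\times(\operatorname{span}\{g_1,\ldots,g_{k-1}\})^\perp$. Here $d$ denotes the number of steps of the CP-sequence considered, namely $d=\min\{k: L(f_\ell,g_\ell)=0\text{ for all }\ell\ge k\}$. *)

theory Defs
  imports "HOL-Probability.Probability"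
begin

text \<open>Abstract Hilbert tensor product: tp f g plays the role of the elementary
tensor fg in H_U (x) H_V.\<close>
definition is_tensor_product ::
  "('u::real_inner \<Rightarrow> 'v::real_inner \<Rightarrow> 't::real_inner) \<Rightarrow> bool" where
  "is_tensor_product tp \<longleftrightarrow>
     (\<forall>f1 f2 g1 g2. inner (tp f1 g1) (tp f2 g2) = inner f1 f2 * inner g1 g2) \<and>
     (\<forall>f. linear (\<lambda>g. tp f g)) \<and> (\<forall>g. linear (\<lambda>f. tp f g)) \<and>
     closure (span (range (\<lambda>(f, g). tp f g))) = UNIV"

definition orth_compl :: "'a::real_inner set \<Rightarrow> 'a set" where
  "orth_compl A = {x. \<forall>a\<in>A. inner x a = 0}"

definition L2_PY :: "'w measure \<Rightarrow> 'y measure \<Rightarrow> ('w \<Rightarrow> 'y) \<Rightarrow> ('y \<Rightarrow> real) set" where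
  "L2_PY M N Y = {u. u \<in> borel_measurable N \<and> integrable (distr M N Y) (\<lambda>y. (u y)\<^sup>2)}"

definition cp_loss ::
  "'w measure \<Rightarrow> 'y measure \<Rightarrow> ('w \<Rightarrow> 'y) \<Rightarrow> ('y \<Rightarrow> 't::real_inner)
   \<Rightarrow> ('u \<Rightarrow> 'v \<Rightarrow> 't) \<Rightarrow> 'u \<Rightarrow> 'v \<Rightarrow> real" where
  "cp_loss M N Y s tp f g =
     (INF u \<in> L2_PY M N Y. \<integral>w. (norm (s (Y w) - u (Y w) *\<^sub>R tp f g))\<^sup>2 \<partial>M)"

text \<open>M(f,g) = E <f, T_{s(Y)} g>^2, where <f, T_rho g> = <fg, rho> by definition of T_rho.\<close>
definition cp_M ::
  "'w measure \<Rightarrow> ('w \<Rightarrow> 'y) \<Rightarrow> ('y \<Rightarrow> 't::real_inner)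
   \<Rightarrow> ('u \<Rightarrow> 'v \<Rightarrow> 't) \<Rightarrow> 'u \<Rightarrow> 'v \<Rightarrow> real" where
  "cp_M M Y s tp f g = (\<integral>w. (inner (tp f g) (s (Y w)))\<^sup>2 \<partial>M)"

definition cp_min_step ::
  "'w measure \<Rightarrow> 'y measure \<Rightarrow> ('w \<Rightarrow> 'y) \<Rightarrow> ('y \<Rightarrow> 't::real_inner)
   \<Rightarrow> ('u::real_inner \<Rightarrow> 'v::real_inner \<Rightarrow> 't) \<Rightarrow> (nat \<Rightarrow> 'u) \<Rightarrow> (nat \<Rightarrow> 'v) \<Rightarrow> nat
   \<Rightarrow> 'u \<Rightarrow> 'v \<Rightarrow> bool" where
  "cp_min_step M N Y s tp fs gs k f g \<longleftrightarrow>
     f \<in> orth_compl (span (fs ` {1..<k})) \<and> g \<in> orth_compl (span (gs ` {1..<k})) \<and>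
     (\<forall>f'\<in>orth_compl (span (fs ` {1..<k})). \<forall>g'\<in>orth_compl (span (gs ` {1..<k})).
        cp_loss M N Y s tp f g \<le> cp_loss M N Y s tp f' g')"

definition cp_max_feasible ::
  "(nat \<Rightarrow> 'u::real_inner) \<Rightarrow> (nat \<Rightarrow> 'v::real_inner) \<Rightarrow> nat \<Rightarrow> 'u \<Rightarrow> 'v \<Rightarrow> bool" where
  "cp_max_feasible fs gs k f g \<longleftrightarrow>
     norm f = 1 \<and> (\<forall>i\<in>{1..<k}. inner f (fs i) = 0) \<and>
     norm g = 1 \<and> (\<forall>i\<in>{1..<k}. inner g (gs i) = 0)"

definition cp_max_step ::
  "'w measure \<Rightarrow> ('w \<Rightarrow> 'y) \<Rightarrow> ('y \<Rightarrow> 't::real_inner)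
   \<Rightarrow> ('u::real_inner \<Rightarrow> 'v::real_inner \<Rightarrow> 't) \<Rightarrow> (nat \<Rightarrow> 'u) \<Rightarrow> (nat \<Rightarrow> 'v) \<Rightarrow> nat
   \<Rightarrow> 'u \<Rightarrow> 'v \<Rightarrow> bool" where
  "cp_max_step M Y s tp fs gs k f g \<longleftrightarrow>
     cp_max_feasible fs gs k f g \<and>
     (\<forall>f' g'. cp_max_feasible fs gs k f' g' \<longrightarrow> cp_M M Y s tp f' g' \<le> cp_M M Y s tp f g)"

end

theory Submission
  imports Defs
begin
lemma pw1: "norm (x - c *\<^sub>R t)^2 = norm x^2 - 2*c*inner t x + c^2 * norm t^2"
  for x t :: "'a::real_inner"
  unfolding power2_norm_eq_inner
  by (simp add: inner_diff_left inner_diff_right inner_commute algebra_simps power2_eq_square)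

lemma pw_val: "norm (x - (inner t x / norm t^2) *\<^sub>R t)^2 = norm x^2 - inner t x^2 / norm t^2"
  for x t :: "'a::real_inner"
proof (cases "t = 0")
  case True then show ?thesis by simp
next
  case False
  then have "norm t ^2 \<noteq> 0" by simp
  then show ?thesis unfolding pw1 by (simp add: field_simps power2_eq_square)
qed

lemma pw_min: "norm (x - (inner t x / norm t^2) *\<^sub>R t)^2 \<le> norm (x - c *\<^sub>R t)^2"
  for x t :: "'a::real_inner"
proof (cases "t = 0")
  case True then show ?thesis by simp
next
  case False
  then have n: "norm t ^2 > 0" by simp
  have "norm (x - c *\<^sub>R t)^2 - norm (x - (inner t x / norm t^2) *\<^sub>R t)^2
      = (c * norm t^2 - inner t x)^2 / norm t^2"
    unfolding pw_val pw1 using n by (simp add: field_simps power2_eq_square)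
  also have "\<dots> \<ge> 0" by simp
  finally show ?thesis by simp
qed

lemma inner_sq_le: "inner t x ^2 / norm t^2 \<le> norm x^2"
  for x t :: "'a::real_inner"
proof (cases "t = 0")
  case True then show ?thesis by simp
next
  case False
  then have n: "norm t > 0" by simp
  have "\<bar>inner t x\<bar> \<le> norm t * norm x" by (rule Cauchy_Schwarz_ineq2)
  then have "inner t x ^2 \<le> (norm t * norm x)^2"
    by (metis abs_ge_zero power2_abs power_mono)
  then show ?thesis using n by (simp add: divide_simps power_mult_distrib mult.commute)
qed

lemma c0_le: "(inner t x / norm t^2)^2 \<le> inverse (norm t^2) * norm x ^2"
  for x t :: "'a::real_inner"
proof (cases "t = 0")
  case True then show ?thesis by simp
next
  case False
  then have n: "norm t^2 > 0" by simp
  have "(inner t x / norm t^2)^2 = inverse (norm t^2) * (inner t x ^2 / norm t^2)"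
    by (simp add: power2_eq_square field_simps)
  also have "\<dots> \<le> inverse (norm t^2) * norm x ^2"
    using inner_sq_le[of t x] n by (intro mult_left_mono) auto
  finally show ?thesis .
qed

lemma tp_sgn:
  assumes "is_tensor_product tp"
  shows "tp (sgn f) (sgn g) = (inverse (norm f) * inverse (norm g)) *\<^sub>R tp f g"
    and "norm (tp f g) = norm f * norm g"
proof -
  from assms have l1: "linear (\<lambda>f. tp f g')" and l2: "linear (\<lambda>g. tp f' g)" for f' g'
    unfolding is_tensor_product_def by auto
  have "tp (sgn f) (sgn g) = tp (inverse (norm f) *\<^sub>R f) (inverse (norm g) *\<^sub>R g)"
    by (simp add: sgn_div_norm divide_inverse_commute scaleR_conv_of_real)
  also have "\<dots> = inverse (norm f) *\<^sub>R tp f (inverse (norm g) *\<^sub>R g)"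
    using linear_cmul[OF l1] by simp
  also have "\<dots> = (inverse (norm f) * inverse (norm g)) *\<^sub>R tp f g"
    using linear_cmul[OF l2] by simp
  finally show "tp (sgn f) (sgn g) = (inverse (norm f) * inverse (norm g)) *\<^sub>R tp f g" .
  have "norm (tp f g)^2 = (norm f * norm g)^2"
    using assms unfolding is_tensor_product_def power2_norm_eq_inner power_mult_distrib by simp
  then show "norm (tp f g) = norm f * norm g"
    by (simp add: power2_eq_iff_nonneg)
qed

lemma inner_sgn_sq:
  assumes "is_tensor_product tp"
  shows "inner (tp f g) x ^2 / norm (tp f g)^2 = inner (tp (sgn f) (sgn g)) x ^2"
  unfolding tp_sgn[OF assms] by (simp add: power_mult_distrib divide_inverse power_inverse)


lemma loss_eq:
  fixes M :: "'w measure" and N :: "'y measure" and Y :: "'w \<Rightarrow> 'y"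
    and s :: "'y \<Rightarrow> 't::{real_inner, complete_space}"
    and tp :: "'u::{real_inner, complete_space} \<Rightarrow> 'v::{real_inner, complete_space} \<Rightarrow> 't"
  assumes P: "prob_space M"
    and Ym: "Y \<in> measurable M N"
    and sm: "s \<in> borel_measurable N"
    and si: "integrable M (\<lambda>w. (norm (s (Y w)))\<^sup>2)"
    and tpt: "is_tensor_product tp"
  shows "cp_loss M N Y s tp f g = (\<integral>w. (norm (s (Y w)))\<^sup>2 \<partial>M) - cp_M M Y s tp (sgn f) (sgn g)"
proof -
  define t where "t = tp f g"
  define u0 where "u0 = (\<lambda>y. inner t (s y) / norm t^2)"
  define J where "J = (\<lambda>u. \<integral>w. (norm (s (Y w) - u (Y w) *\<^sub>R tp f g))\<^sup>2 \<partial>M)"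
  have sYm: "(\<lambda>w. s (Y w)) \<in> borel_measurable M" using sm Ym by measurable
  have im: "(\<lambda>y. inner a (s y)) \<in> borel_measurable N" for a :: 't
    by (rule borel_measurable_continuous_on[OF _ sm]) (intro continuous_intros)
  have nm: "(\<lambda>y. norm (s y)) \<in> borel_measurable N"
    by (rule borel_measurable_continuous_on[OF _ sm]) (intro continuous_intros)
  note [measurable] = im nm
  have u0m: "u0 \<in> borel_measurable N" unfolding u0_def by measurable
  have u0i: "integrable M (\<lambda>w. (u0 (Y w))^2)"
  proof (rule Bochner_Integration.integrable_bound)
    show "integrable M (\<lambda>w. inverse (norm t^2) * (norm (s (Y w)))\<^sup>2)"
      using si by simp
    show "(\<lambda>w. (u0 (Y w))^2) \<in> borel_measurable M" using u0m Ym by measurable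
    show "AE w in M. norm ((u0 (Y w))^2) \<le> norm (inverse (norm t^2) * (norm (s (Y w)))\<^sup>2)"
    proof (intro AE_I2)
      fix w
      have "(u0 (Y w))^2 \<le> inverse (norm t^2) * (norm (s (Y w)))\<^sup>2"
        unfolding u0_def by (rule c0_le)
      then show "norm ((u0 (Y w))^2) \<le> norm (inverse (norm t^2) * (norm (s (Y w)))\<^sup>2)"
        by simp
    qed
  qed
  have u0L: "u0 \<in> L2_PY M N Y"
  proof -
    have "(\<lambda>y. (u0 y)^2) \<in> borel_measurable N" using u0m by measurable
    from integrable_distr_eq[OF Ym this] show ?thesis
      unfolding L2_PY_def using u0m u0i by auto
  qed
  have Ji: "integrable M (\<lambda>w. (norm (s (Y w) - u (Y w) *\<^sub>R t))\<^sup>2)" if "u \<in> L2_PY M N Y" for u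
  proof -
    have um: "u \<in> borel_measurable N" and ui: "integrable M (\<lambda>w. (u (Y w))^2)"
    proof -
      show um: "u \<in> borel_measurable N" using that unfolding L2_PY_def by auto
      have "(\<lambda>y. (u y)^2) \<in> borel_measurable N" using um by measurable
      from integrable_distr_eq[OF Ym this] show "integrable M (\<lambda>w. (u (Y w))^2)"
        using that unfolding L2_PY_def by auto
    qed
    show ?thesis
    proof (rule Bochner_Integration.integrable_bound)
      show "integrable M (\<lambda>w. 2 * (norm (s (Y w)))\<^sup>2 + 2 * norm t ^2 * (u (Y w))^2)"
        using si ui by simp
      show "(\<lambda>w. (norm (s (Y w) - u (Y w) *\<^sub>R t))\<^sup>2) \<in> borel_measurable M"
        unfolding pw1 using um Ym by measurable
      have "(norm (a - b))^2 \<le> 2 * norm a ^2 + 2 * norm b ^2" for a b :: 't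
      proof -
        have "norm (a - b) \<le> norm a + norm b" by (rule norm_triangle_ineq4)
        then have "norm (a - b)^2 \<le> (norm a + norm b)^2" by (simp add: power_mono)
        also have "\<dots> \<le> 2 * norm a ^2 + 2 * norm b ^2"
          using sum_squares_ge_zero[of "norm a - norm b" 0] by (simp add: power2_eq_square algebra_simps)
        finally show ?thesis .
      qed
      note tri = this
      show "AE w in M. norm ((norm (s (Y w) - u (Y w) *\<^sub>R t))\<^sup>2) \<le>
          norm (2 * (norm (s (Y w)))\<^sup>2 + 2 * norm t ^2 * (u (Y w))^2)"
      proof (intro AE_I2)
        fix w
        have "(norm (s (Y w) - u (Y w) *\<^sub>R t))\<^sup>2 \<le> 2 * (norm (s (Y w)))\<^sup>2 + 2 * norm (u (Y w) *\<^sub>R t) ^2"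
          by (rule tri)
        also have "norm (u (Y w) *\<^sub>R t) ^2 = norm t ^2 * (u (Y w))^2"
          by (simp add: power_mult_distrib)
        finally show "norm ((norm (s (Y w) - u (Y w) *\<^sub>R t))\<^sup>2) \<le>
          norm (2 * (norm (s (Y w)))\<^sup>2 + 2 * norm t ^2 * (u (Y w))^2)" by simp
      qed
    qed
  qed
  have low: "J u0 \<le> J u" if "u \<in> L2_PY M N Y" for u
    unfolding J_def t_def[symmetric]
    by (rule integral_mono[OF Ji[OF u0L] Ji[OF that]]) (simp add: u0_def pw_min)
  have "cp_loss M N Y s tp f g = J u0"
    unfolding cp_loss_def J_def[symmetric]
  proof (rule antisym)
    show "(INF u\<in>L2_PY M N Y. J u) \<le> J u0"
      by (rule cINF_lower[OF _ u0L]) (use low in \<open>auto simp: bdd_below_def\<close>)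
    show "J u0 \<le> (INF u\<in>L2_PY M N Y. J u)"
      by (rule cINF_greatest) (use u0L low in auto)
  qed
  also have "J u0 = (\<integral>w. (norm (s (Y w)))\<^sup>2 - inner (tp (sgn f) (sgn g)) (s (Y w)) ^2 \<partial>M)"
    unfolding J_def t_def[symmetric] u0_def pw_val
    by (simp add: inner_sgn_sq[OF tpt, symmetric] t_def)
  also have "\<dots> = (\<integral>w. (norm (s (Y w)))\<^sup>2 \<partial>M) - cp_M M Y s tp (sgn f) (sgn g)"
    unfolding cp_M_def
  proof (rule Bochner_Integration.integral_diff[OF si])
    show "integrable M (\<lambda>w. inner (tp (sgn f) (sgn g)) (s (Y w)) ^2)"
    proof (rule Bochner_Integration.integrable_bound)
      show "integrable M (\<lambda>w. norm (tp (sgn f) (sgn g))^2 * (norm (s (Y w)))\<^sup>2)"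
        using si by simp
      show "(\<lambda>w. inner (tp (sgn f) (sgn g)) (s (Y w)) ^2) \<in> borel_measurable M"
        using Ym by measurable
      have "inner a b ^2 \<le> norm a ^2 * norm b ^2" for a b :: 't
        using Cauchy_Schwarz_ineq[of a b] by (simp add: power2_norm_eq_inner)
      then show "AE w in M. norm (inner (tp (sgn f) (sgn g)) (s (Y w)) ^2) \<le>
         norm (norm (tp (sgn f) (sgn g))^2 * (norm (s (Y w)))\<^sup>2)" by simp
    qed
  qed
  finally show ?thesis .
qed


lemma orth_iff: "(\<forall>i\<in>{1..<k}. inner f (fs i) = 0) \<longleftrightarrow> f \<in> orth_compl (span (fs ` {1..<k}))"
proof
  assume h: "\<forall>i\<in>{1..<k}. inner f (fs i) = 0"
  show "f \<in> orth_compl (span (fs ` {1..<k}))"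
    unfolding orth_compl_def
  proof (safe)
    fix a assume "a \<in> span (fs ` {1..<k})"
    then have "orthogonal f a"
      by (rule orthogonal_to_span) (use h in \<open>auto simp: orthogonal_def\<close>)
    then show "inner f a = 0" by (simp add: orthogonal_def)
  qed
next
  assume "f \<in> orth_compl (span (fs ` {1..<k}))"
  then show "\<forall>i\<in>{1..<k}. inner f (fs i) = 0"
    unfolding orth_compl_def by (auto intro: span_base)
qed

lemma orth_sgn: "f \<in> orth_compl A \<Longrightarrow> sgn f \<in> orth_compl A"
  unfolding orth_compl_def by (simp add: sgn_div_norm)

lemma cpM_nonneg: "0 \<le> cp_M M Y s tp f g"
  unfolding cp_M_def by simp

lemma cpM_zero:
  assumes "is_tensor_product tp" "f = 0 \<or> g = 0"
  shows "cp_M M Y s tp (sgn f) (sgn g) = 0"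
proof -
  have "tp (sgn f) (sgn g) = 0"
    using assms tp_sgn(1)[OF assms(1), of f g] by auto
  then show ?thesis unfolding cp_M_def by simp
qed

theorem proposition3:
  fixes M :: "'w measure" and N :: "'y measure" and Y :: "'w \<Rightarrow> 'y"
    and s :: "'y \<Rightarrow> 't::{real_inner, complete_space}"
    and tp :: "'u::{real_inner, complete_space} \<Rightarrow> 'v::{real_inner, complete_space} \<Rightarrow> 't"
    and fs :: "nat \<Rightarrow> 'u" and gs :: "nat \<Rightarrow> 'v" and k :: nat
  assumes "prob_space M"
    and "Y \<in> measurable M N"
    and "s \<in> borel_measurable N"
    and "integrable M (\<lambda>w. (norm (s (Y w)))\<^sup>2)"
    and "is_tensor_product tp"
    and "1 \<le> k"
  shows "(\<forall>f g. f \<noteq> 0 \<longrightarrow> g \<noteq> 0 \<longrightarrow>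
            (cp_min_step M N Y s tp fs gs k f g \<longleftrightarrow>
               f \<in> orth_compl (span (fs ` {1..<k})) \<and> g \<in> orth_compl (span (gs ` {1..<k})) \<and>
               cp_max_step M Y s tp fs gs k (sgn f) (sgn g)))
       \<and> (\<forall>f g. cp_max_step M Y s tp fs gs k f g \<longrightarrow> cp_min_step M N Y s tp fs gs k f g)"
proof -
  define A where "A = orth_compl (span (fs ` {1..<k}))"
  define B where "B = orth_compl (span (gs ` {1..<k}))"
  define Mx where "Mx = cp_M M Y s tp"
  note L = loss_eq[OF assms(1-5)]
  have feas: "cp_max_feasible fs gs k f g \<longleftrightarrow> norm f = 1 \<and> f \<in> A \<and> norm g = 1 \<and> g \<in> B" for f g
    unfolding cp_max_feasible_def A_def B_def orth_iff by auto
  have minE: "cp_min_step M N Y s tp fs gs k f g \<longleftrightarrow> f \<in> A \<and> g \<in> B \<and>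
      (\<forall>f'\<in>A. \<forall>g'\<in>B. Mx (sgn f') (sgn g') \<le> Mx (sgn f) (sgn g))" for f g
    unfolding cp_min_step_def A_def[symmetric] B_def[symmetric] L Mx_def by auto
  have maxE: "cp_max_step M Y s tp fs gs k f g \<longleftrightarrow> cp_max_feasible fs gs k f g \<and>
      (\<forall>f' g'. cp_max_feasible fs gs k f' g' \<longrightarrow> Mx f' g' \<le> Mx f g)" for f g
    unfolding cp_max_step_def Mx_def ..
  have key: "cp_min_step M N Y s tp fs gs k f g"
    if "f \<in> A" "g \<in> B" "f \<noteq> 0" "g \<noteq> 0" "cp_max_step M Y s tp fs gs k (sgn f) (sgn g)" for f g
    unfolding minE
  proof (intro conjI ballI that(1,2))
    fix f' g' assume f': "f' \<in> A" and g': "g' \<in> B"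
    show "Mx (sgn f') (sgn g') \<le> Mx (sgn f) (sgn g)"
    proof (cases "f' = 0 \<or> g' = 0")
      case True
      then show ?thesis using cpM_zero[OF assms(5) True] cpM_nonneg unfolding Mx_def by metis
    next
      case False
      then have "cp_max_feasible fs gs k (sgn f') (sgn g')"
        unfolding feas using orth_sgn[OF f'[unfolded A_def]] orth_sgn[OF g'[unfolded B_def]] A_def B_def by (auto simp: norm_sgn)
      then show ?thesis using that(5) unfolding maxE by blast
    qed
  qed
  have part1: "cp_min_step M N Y s tp fs gs k f g \<longleftrightarrow>
               f \<in> A \<and> g \<in> B \<and> cp_max_step M Y s tp fs gs k (sgn f) (sgn g)"
    if "f \<noteq> 0" "g \<noteq> 0" for f g
  proof
    assume h: "cp_min_step M N Y s tp fs gs k f g"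
    then have fA: "f \<in> A" and gB: "g \<in> B" and opt: "\<forall>f'\<in>A. \<forall>g'\<in>B. Mx (sgn f') (sgn g') \<le> Mx (sgn f) (sgn g)"
      unfolding minE by auto
    have "cp_max_feasible fs gs k (sgn f) (sgn g)"
      unfolding feas using orth_sgn[OF fA[unfolded A_def]] orth_sgn[OF gB[unfolded B_def]] that A_def B_def by (auto simp: norm_sgn)
    moreover have "Mx f' g' \<le> Mx (sgn f) (sgn g)" if "cp_max_feasible fs gs k f' g'" for f' g'
    proof -
      from that have "norm f' = 1" "f' \<in> A" "norm g' = 1" "g' \<in> B" unfolding feas by auto
      then have "sgn f' = f'" "sgn g' = g'" by (auto simp: sgn_div_norm)
      with opt \<open>f' \<in> A\<close> \<open>g' \<in> B\<close> show ?thesis by metis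
    qed
    ultimately show "f \<in> A \<and> g \<in> B \<and> cp_max_step M Y s tp fs gs k (sgn f) (sgn g)"
      using fA gB unfolding maxE by blast
  next
    assume "f \<in> A \<and> g \<in> B \<and> cp_max_step M Y s tp fs gs k (sgn f) (sgn g)"
    then show "cp_min_step M N Y s tp fs gs k f g" using key that by blast
  qed
  have part2: "cp_min_step M N Y s tp fs gs k f g" if "cp_max_step M Y s tp fs gs k f g" for f g
  proof -
    from that have fe: "cp_max_feasible fs gs k f g" unfolding maxE by blast
    then have "norm f = 1" "f \<in> A" "norm g = 1" "g \<in> B" unfolding feas by auto
    then have "sgn f = f" "sgn g = g" "f \<noteq> 0" "g \<noteq> 0" by (auto simp: sgn_div_norm)
    then show ?thesis using key[of f g] that \<open>f \<in> A\<close> \<open>g \<in> B\<close> by simp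
  qed
  show ?thesis using part1 part2 unfolding A_def B_def by blast
qed

end
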